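(* Let $M\ge 2$ and consider $M$ bosonic modes $a_1,\dots,a_M$. Define the centre-of-mass mode $a_+ \coloneqq \frac{1}{\sqrt{M}}\sum_{m=1}^M a_m$, and the operators $\Pi_{+M}\coloneqq e^{i\pi a_+^\dagger a_+}$ and $\Pi_{-M}\coloneqq e^{i\pi(\sum_{m=1}^M a_m^\dagger a_m - a_+^\dagger a_+)} = \Pi\,\Pi_{+M}$, where $\Pi = e^{-i\pi\sum_{m=1}^M a_m^\dagger a_m}$. Then $\Pi_{+M}$ and $\Pi_{-M}$ are multiport beamsplitters, and for every $m\in\{1,\dots,M\}$ they act on the local modes as $$\Pi_{\pm M}\, a_m\, \Pi_{\pm M} = \pm\left(1-\frac{2}{M}\right)a_m \mp \frac{2}{M}\sum_{m'\neq m} a_{m'}.$$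
   Context: The modes satisfy the canonical commutation relations $[a_m,a_{m'}]=0$, $[a_m,a_{m'}^\dagger]=\delta_{m,m'}\mathbb{1}$. Writing $\vec{a}=(a_1,\dots,a_M)^T$, a multiport beamsplitter is a unitary of the form $e^{\vec{a}^\dagger(\log\mathcal{U})\vec{a}}$ for an $M\times M$ unitary matrix $\mathcal{U}$; it acts as $e^{-\vec{a}^\dagger(\log\mathcal{U})\vec{a}}\,\vec{a}\,e^{\vec{a}^\dagger(\log\mathcal{U})\vec{a}}=\mathcal{U}\vec{a}$. *)

theory Defs
  imports "HOL-Analysis.Analysis"
begin

text \<open>Single-mode (first-quantised) level: an operator e^{a^dagger L a} is determined by the
  M x M matrix L; its mode transformation is the matrix exponential exp L.\<close>

primrec matpow :: "complex^'n^'n \<Rightarrow> nat \<Rightarrow> complex^'n^'n" where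
  "matpow A 0 = mat 1"
| "matpow A (Suc k) = A ** matpow A k"

definition mexp :: "complex^'n^'n \<Rightarrow> complex^'n^'n" where
  "mexp A = (\<Sum>k. (1 / fact k) *\<^sub>R matpow A k)"

definition adjoint_mat :: "complex^'n^'n \<Rightarrow> complex^'n^'n" where
  "adjoint_mat A = (\<chi> i j. cnj (A $ j $ i))"

definition unitary_mat :: "complex^'n^'n \<Rightarrow> bool" where
  "unitary_mat U \<longleftrightarrow> U ** adjoint_mat U = mat 1 \<and> adjoint_mat U ** U = mat 1"

text \<open>Centre-of-mass projector: a_+^dagger a_+ = a^dagger P a with P_{mm'} = 1/M.\<close>
definition com_proj :: "complex^'n^'n" where
  "com_proj = (\<chi> i j. 1 / of_nat CARD('n))"

text \<open>Generators: Pi_{+M} = e^{a^dagger G_+ a}, Pi_{-M} = e^{a^dagger G_- a}, Pi = e^{a^dagger G_Pi a}.\<close>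
definition gen_plus :: "complex^'n^'n" where
  "gen_plus = (\<chi> i j. \<i> * of_real pi * com_proj $ i $ j)"

definition gen_minus :: "complex^'n^'n" where
  "gen_minus = (\<chi> i j. \<i> * of_real pi * (mat 1 - com_proj) $ i $ j)"

definition gen_parity :: "complex^'n^'n" where
  "gen_parity = (\<chi> i j. - \<i> * of_real pi * mat 1 $ i $ j)"

end

theory Submission imports Defs begin
lemma matpow_idem:
  fixes Q :: "complex^'n^'n"
  assumes "Q ** Q = Q"
  shows "matpow (\<chi> i j. c * Q$i$j) (Suc k) = (\<chi> i j. c^(Suc k) * Q$i$j)"
proof (induction k)
  case 0 show ?case by (simp only: matpow.simps matrix_mul_rid power_Suc power_0 mult_1_right)
next
  case (Suc k)
  have q: "\<And>i j. (\<Sum>l\<in>UNIV. Q$i$l * Q$l$j) = Q$i$j"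
  proof -
    fix i j
    have "(Q ** Q) $ i $ j = Q $ i $ j" using assms by simp
    then show "(\<Sum>l\<in>UNIV. Q$i$l * Q$l$j) = Q$i$j" unfolding matrix_matrix_mult_def by simp
  qed
  have "matpow (\<chi> i j. c * Q$i$j) (Suc (Suc k)) = (\<chi> i j. c * Q$i$j) ** (\<chi> i j. c^(Suc k) * Q$i$j)"
    using Suc by (simp only: matpow.simps)
  also have "\<dots> = (\<chi> i j. c^(Suc (Suc k)) * (\<Sum>l\<in>UNIV. Q$i$l * Q$l$j))"
    unfolding matrix_matrix_mult_def
    by (simp add: sum_distrib_left mult_ac)
  finally show ?case by (simp only: q)
qed

lemma bl: "bounded_linear (\<lambda>z::complex. (\<chi> i j. z * (Q::complex^'n^'n)$i$j))"
  apply (rule linear_conv_bounded_linear[THEN iffD1])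
  apply (rule linearI)
  by (simp_all add: vec_eq_iff distrib_right)

lemma mexp_idem:
  fixes Q :: "complex^'n^'n"
  assumes "Q ** Q = Q"
  shows "mexp (\<chi> i j. c * Q$i$j) = (\<chi> i j. mat 1 $i$j - Q$i$j + exp c * Q$i$j)"
proof -
  define L where "L = (\<lambda>z::complex. (\<chi> i j. z * Q$i$j))"
  have blL: "bounded_linear L" unfolding L_def by (rule bl)
  have t: "(1 / fact k) *\<^sub>R matpow (\<chi> i j. c * Q$i$j) k
      = L (c^k /\<^sub>R fact k) + (if k = 0 then mat 1 - Q else 0)" for k
  proof (cases k)
    case 0 then show ?thesis by (simp add: L_def vec_eq_iff)
  next
    case (Suc k')
    have "(1 / fact k) *\<^sub>R matpow (\<chi> i j. c * Q$i$j) k = (1 / fact k) *\<^sub>R (\<chi> i j. c^k * Q$i$j)"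
      using matpow_idem[OF assms, of c k'] Suc by simp
    also have "\<dots> = L (c^k /\<^sub>R fact k)"
      unfolding L_def by (simp add: vec_eq_iff inverse_eq_divide)
    finally show ?thesis using Suc by simp
  qed
  have s1: "(\<lambda>k. L (c^k /\<^sub>R fact k)) sums L (exp c)"
    using bounded_linear.sums[OF blL exp_converges] .
  have s2: "(\<lambda>k. if k = 0 then mat 1 - Q else 0) sums (mat 1 - Q)"
    using sums_single[of 0 "\<lambda>_. mat 1 - Q"] by simp
  have "(\<lambda>k. (1 / fact k) *\<^sub>R matpow (\<chi> i j. c * Q$i$j) k) sums (L (exp c) + (mat 1 - Q))"
    unfolding t by (rule sums_add[OF s1 s2])
  then have "mexp (\<chi> i j. c * Q$i$j) = L (exp c) + (mat 1 - Q)"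
    unfolding mexp_def by (rule sums_unique[symmetric])
  then show ?thesis by (simp add: L_def vec_eq_iff)
qed
lemma mm_sub_l: "((A::complex^'n^'n) - B) ** C = A ** C - B ** C"
  by (simp add: matrix_matrix_mult_def vec_eq_iff left_diff_distrib sum_subtractf)
lemma mm_sub_r: "(A::complex^'n^'n) ** (B - C) = A ** B - A ** C"
  by (simp add: matrix_matrix_mult_def vec_eq_iff right_diff_distrib sum_subtractf)

lemma g1: "(a::'a::ab_group_add) - q - q - (q - q - q) - (q - q - q) = a" by (simp add: algebra_simps)
lemma g2: "(a::'a::ab_group_add) - q - (q - q) = a - q" by simp
lemma g3: "(a::'a::ab_group_add) - (a - p) - (a - p) = a - p - p - (a - p - p) - (a - p - p)" by (simp add: algebra_simps)

lemma refl_sq: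
  fixes Q :: "complex^'n^'n"
  assumes "Q ** Q = Q"
  shows "(mat 1 - Q - Q) ** (mat 1 - Q - Q) = mat 1"
  by (simp only: mm_sub_l mm_sub_r matrix_mul_lid matrix_mul_rid assms) (rule g1)

lemma compl_idem:
  fixes Q :: "complex^'n^'n"
  assumes "Q ** Q = Q"
  shows "(mat 1 - Q) ** (mat 1 - Q) = mat 1 - Q"
  by (simp only: mm_sub_l mm_sub_r matrix_mul_lid matrix_mul_rid assms) (rule g2)

lemma mexp_neg1:
  fixes Q :: "complex^'n^'n"
  assumes "Q ** Q = Q" "exp c = -1"
  shows "mexp (\<chi> i j. c * Q$i$j) = mat 1 - Q - Q"
  using mexp_idem[OF assms(1), of c] assms(2) by (simp add: vec_eq_iff)

lemma mexp_pos1: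
  fixes Q :: "complex^'n^'n"
  assumes "Q ** Q = Q" "exp c = 1"
  shows "mexp (\<chi> i j. c * Q$i$j) = mat 1"
  using mexp_idem[OF assms(1), of c] assms(2) by (simp add: vec_eq_iff)

lemma P_idem: "(com_proj::complex^'n^'n) ** com_proj = com_proj"
proof -
  have N: "(of_nat CARD('n) :: complex) \<noteq> 0" by simp
  have e: "(\<Sum>l\<in>(UNIV::'n set). (1 / of_nat CARD('n)) * (1 / of_nat CARD('n) :: complex)) = 1 / of_nat CARD('n)"
    using N by (simp add: field_simps)
  show ?thesis
    unfolding matrix_matrix_mult_def com_proj_def vec_eq_iff
    by (simp only: vec_lambda_beta e) simp
qed

lemma adj_real:
  fixes A :: "complex^'n^'n"
  assumes "\<And>i j. A$i$j = A$j$i" "\<And>i j. cnj (A$i$j) = A$i$j"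
  shows "adjoint_mat A = A"
  using assms by (simp add: adjoint_mat_def vec_eq_iff)

theorem proposition2:
  assumes "CARD('n::finite) \<ge> 2"
  shows "unitary_mat (mexp (gen_plus :: complex^'n^'n))
       \<and> unitary_mat (mexp (gen_minus :: complex^'n^'n))
       \<and> mexp (gen_minus :: complex^'n^'n) = mexp gen_parity ** mexp gen_plus
       \<and> mexp ((gen_plus :: complex^'n^'n) + gen_plus) = mat 1
       \<and> mexp ((gen_minus :: complex^'n^'n) + gen_minus) = mat 1
       \<and> (\<forall>m m'. mexp (gen_plus :: complex^'n^'n) $ m $ m' =
             (if m = m' then 1 - 2 / of_nat CARD('n) else - 2 / of_nat CARD('n)))
       \<and> (\<forall>m m'. mexp (gen_minus :: complex^'n^'n) $ m $ m' =
             (if m = m' then - (1 - 2 / of_nat CARD('n)) else 2 / of_nat CARD('n)))"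
proof -
  let ?P = "com_proj :: complex^'n^'n"
  let ?Q = "mat 1 - ?P"
  have PI: "?P ** ?P = ?P" by (rule P_idem)
  have QI: "?Q ** ?Q = ?Q" by (rule compl_idem[OF PI])
  have II: "(mat 1 :: complex^'n^'n) ** mat 1 = mat 1" by simp
  have e1: "exp (\<i> * of_real pi) = -1" by simp
  have e2: "exp (2 * (\<i> * of_real pi)) = 1"
    using exp_two_pi_i by (simp add: mult_ac)
  have e3: "exp (- (\<i> * of_real pi)) = -1" by (simp add: exp_minus)
  have gp: "mexp (gen_plus :: complex^'n^'n) = mat 1 - ?P - ?P"
    unfolding gen_plus_def using mexp_neg1[OF PI e1] by (simp add: mult.assoc)
  have gm: "mexp (gen_minus :: complex^'n^'n) = mat 1 - ?Q - ?Q"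
    unfolding gen_minus_def using mexp_neg1[OF QI e1] by (simp add: mult.assoc)
  have gpar: "mexp (gen_parity :: complex^'n^'n) = mat 1 - mat 1 - mat 1"
    unfolding gen_parity_def using mexp_neg1[OF II e3] by (simp add: mult.assoc)
  have gp2: "mexp ((gen_plus :: complex^'n^'n) + gen_plus) = mat 1"
  proof -
    have "(gen_plus :: complex^'n^'n) + gen_plus = (\<chi> i j. (2 * (\<i> * of_real pi)) * ?P$i$j)"
      unfolding gen_plus_def by (simp add: vec_eq_iff algebra_simps)
    then show ?thesis using mexp_pos1[OF PI e2] by simp
  qed
  have gm2: "mexp ((gen_minus :: complex^'n^'n) + gen_minus) = mat 1"
  proof -
    have "(gen_minus :: complex^'n^'n) + gen_minus = (\<chi> i j. (2 * (\<i> * of_real pi)) * ?Q$i$j)"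
      unfolding gen_minus_def by (simp add: vec_eq_iff algebra_simps)
    then show ?thesis using mexp_pos1[OF QI e2] by simp
  qed
  have ep: "mexp (gen_plus :: complex^'n^'n) $ m $ m' =
             (if m = m' then 1 - 2 / of_nat CARD('n) else - 2 / of_nat CARD('n))" for m m'
    unfolding gp by (simp add: com_proj_def mat_def)
  have em: "mexp (gen_minus :: complex^'n^'n) $ m $ m' =
             (if m = m' then - (1 - 2 / of_nat CARD('n)) else 2 / of_nat CARD('n))" for m m'
    unfolding gm by (simp add: com_proj_def mat_def)
  have ap: "adjoint_mat (mexp (gen_plus :: complex^'n^'n)) = mexp gen_plus"
    by (rule adj_real) (simp_all add: ep)
  have am: "adjoint_mat (mexp (gen_minus :: complex^'n^'n)) = mexp gen_minus"
    by (rule adj_real) (simp_all add: em)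
  have up: "unitary_mat (mexp (gen_plus :: complex^'n^'n))"
    unfolding unitary_mat_def ap unfolding gp by (simp only: refl_sq[OF PI])
  have um: "unitary_mat (mexp (gen_minus :: complex^'n^'n))"
    unfolding unitary_mat_def am unfolding gm by (simp only: refl_sq[OF QI])
  have prod: "mexp (gen_minus :: complex^'n^'n) = mexp gen_parity ** mexp gen_plus"
    unfolding gm gpar gp by (simp only: mm_sub_l matrix_mul_lid) (rule g3)
  show ?thesis by (intro conjI allI up um prod gp2 gm2 ep em)
qed
end
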